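(* Let $L\geq1$ be an integer, $P\geq 0$, $p_B\in[0,1]$, and let $\alpha\sim\mathrm{Binomial}(L,1-p_B)$. Then $$\sup_{r\in\mathbb{R}} r\cdot\mathbb{P}\big(\log(1+\alpha P)\geq r\big)=\max_{i\in\{1,\ldots,L\}}\mathbb{P}(\alpha\geq i)\log(1+iP).$$
   Context: The left-hand side is the outage capacity of a multi-point intermittent block fading channel with $L$ transmitters, each independently blocked with probability $p_B$, and per-transmitter power $P$; $\alpha$ is the number of non-blocked transmitters. $\log$ is the logarithm in a fixed base. *)

theory Defs
  imports "HOL-Probability.Probability"
begin

end

theory Submission
  imports Defs
begin

theorem proposition2:
  fixes L :: nat and P pB b :: real
  assumes "L \<ge> 1" and "P \<ge> 0" and "0 \<le> pB" and "pB \<le> 1" and "b > 1"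
  shows "(SUP r::real. r * measure_pmf.prob (binomial_pmf L (1 - pB))
            {a. log b (1 + real a * P) \<ge> r})
       = Max ((\<lambda>i. measure_pmf.prob (binomial_pmf L (1 - pB)) {a. a \<ge> i}
                      * log b (1 + real i * P)) ` {1..L})"
proof -
  define p where "p = binomial_pmf L (1 - pB)"
  define g where "g = (\<lambda>a::nat. log b (1 + real a * P))"
  define f where "f = (\<lambda>r::real. r * measure_pmf.prob p {a. g a \<ge> r})"
  define v where "v = (\<lambda>i::nat. measure_pmf.prob p {a. a \<ge> i} * g i)"
  define M where "M = Max (v ` {1..L})"
  have gnn: "g a \<ge> 0" for a unfolding g_def
  proof -
    have "1 \<le> 1 + real a * P" using assms by simp
    then show "0 \<le> log b (1 + real a * P)" using assms by (subst zero_le_log_cancel_iff) (auto simp: add_pos_nonneg)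
  qed
  have g0: "g 0 = 0" unfolding g_def by simp
  have gmono: "a \<le> c \<Longrightarrow> g a \<le> g c" for a c
  proof -
    assume "a \<le> c"
    then have "real a * P \<le> real c * P" using assms by (simp add: mult_right_mono)
    moreover have "0 < 1 + real a * P" using assms by (simp add: add_pos_nonneg)
    ultimately show ?thesis unfolding g_def using assms by simp
  qed
  have fin: "finite (v ` {1..L})" by simp
  have ne: "v ` {1..L} \<noteq> {}" using assms by simp
  have vM: "i \<in> {1..L} \<Longrightarrow> v i \<le> M" for i unfolding M_def using fin by simp
  have "0 \<le> v 1" unfolding v_def using gnn[of 1] by simp
  then have M0: "0 \<le> M" using vM[of 1] assms by simp
  have setp: "set_pmf p \<subseteq> {..L}"
    unfolding p_def using assms by (subst set_pmf_binomial_eq) auto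
  have fM: "f r \<le> M" for r
  proof (cases "r \<le> 0")
    case True
    then have "f r \<le> 0" unfolding f_def by (simp add: mult_nonpos_nonneg)
    then show ?thesis using M0 by simp
  next
    case False
    define S where "S = {a. g a \<ge> r}"
    show ?thesis
    proof (cases "S \<inter> {..L} = {}")
      case True
      then have "set_pmf p \<inter> S = {}" using setp by blast
      then have "measure_pmf.prob p S = 0" by (simp add: measure_pmf_zero_iff)
      then show ?thesis using M0 unfolding f_def S_def by simp
    next
      case F2: False
      then obtain k where k: "k \<in> S" "k \<le> L" by blast
      define i where "i = (LEAST a. a \<in> S)"
      have iS: "i \<in> S" unfolding i_def using k by (metis LeastI)
      have iL: "i \<le> L" unfolding i_def using k by (meson Least_le order_trans)
      have i1: "i \<ge> 1" using iS False g0 unfolding S_def by (cases i) auto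
      have sub: "S \<subseteq> {a. a \<ge> i}" unfolding i_def by (auto intro: Least_le)
      have "measure_pmf.prob p S \<le> measure_pmf.prob p {a. a \<ge> i}"
        using sub by (rule measure_pmf.finite_measure_mono) simp
      moreover have "r \<le> g i" using iS unfolding S_def by simp
      ultimately have "f r \<le> v i" unfolding f_def v_def S_def using False
        by (metis (no_types, lifting) measure_nonneg mult.commute mult_mono not_le order.strict_implies_order)
      then show ?thesis using vM[of i] i1 iL by simp
    qed
  qed
  have bdd: "bdd_above (range f)" using fM by (intro bdd_aboveI[where M=M]) auto
  have "(SUP r. f r) = M"
  proof (rule antisym)
    show "(SUP r. f r) \<le> M" by (rule cSUP_least) (use fM in auto)
  next
    obtain i where i: "i \<in> {1..L}" "M = v i"
      unfolding M_def using Max_in[OF fin ne] by auto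
    have "measure_pmf.prob p {a. a \<ge> i} \<le> measure_pmf.prob p {a. g a \<ge> g i}"
      by (rule measure_pmf.finite_measure_mono) (auto intro: gmono)
    then have "v i \<le> f (g i)" unfolding v_def f_def using gnn[of i]
      by (simp add: mult.commute mult_left_mono)
    also have "\<dots> \<le> (SUP r. f r)" by (rule cSUP_upper[OF _ bdd]) simp
    finally show "M \<le> (SUP r. f r)" using i by simp
  qed
  then show ?thesis unfolding f_def g_def M_def v_def p_def by simp
qed

end
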